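(* Let $D$ be a vertex-supported divisor on a metric graph $\Gamma$. If $C$ is an anchor cell of $|D|$ represented by a divisor $D+(f)$ with $f\in R(D)$, then $C$ is uniquely determined by the outgoing slopes of $f$ at all vertices of $\Gamma$ (along all edges incident to them).
   Context: A metric graph $\Gamma=(V,E)$ is a connected undirected graph whose edges have positive real lengths $M_e$. Divisors are finite formal $\mathbb{Z}$-combinations of points of $\Gamma$; effective means nonnegative coefficients; vertex-supported means support in $V$. A rational function is a continuous $f:\Gamma\to\mathbb{R}$, piecewise linear on each edge with finitely many pieces and integer slopes; $(f)=\sum_x\mathrm{ord}_x(f)x$ with $\mathrm{ord}_x(f)$ the sum of outgoing slopes at $x$. $R(D)=\{f:D+(f)\text{ effective}\}$, $|D|=\{D+(f):f\in R(D)\}$. Cells of $|D|$: identify each open edge $e$ with $(0,M_e)$. A cell is given by data: nonnegative integers $d_v$ ($v\in V$), ordered partitions $d_e=\sum_{i=1}^{r_e}d_e^i$ into positive integers for some edges, and integers $m_e$ ($e\in E$); $L\in|D|$ belongs to it iff $L(v)=d_v$, $L|_{e^\circ}=\sum_i d_e^ix_i$ with $0<x_1<\dots<x_{r_e}<M_e$ on edges with a partition and $L|_{e^\circ}=0$ otherwise, and every $f\in R(D)$ with $L=D+(f)$ has outgoing slope $m_e$ at $0\in e$. Elements of a cell are its representatives; a cell is determined by its data. An anchor divisor is a divisor with at most one positive interior point on each edge; an anchor cell is a cell all of whose representatives are anchor divisors. *)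

theory Defs
  imports Complex_Main
begin

text \<open>A metric graph: vertex set, edge set, each edge oriented from its tail to its
  head (only to fix the identification of the open edge with the interval (0, len e)),
  and positive edge lengths.  Multiple edges and loops are allowed.\<close>

record ('v,'e) mgraph =
  verts :: "'v set"
  edges :: "'e set"
  tail  :: "'e \<Rightarrow> 'v"
  head  :: "'e \<Rightarrow> 'v"
  elen  :: "'e \<Rightarrow> real"

text \<open>Points of the metric graph: a vertex, or the point at parameter t of edge e
  (only meaningful for 0 < t < elen e).\<close>
datatype ('v,'e) point = Vtx 'v | Pt 'e real

definition valid_pt :: "('v,'e) mgraph \<Rightarrow> ('v,'e) point \<Rightarrow> bool" where
  "valid_pt G x = (case x of Vtx v \<Rightarrow> v \<in> verts G
                   | Pt e t \<Rightarrow> e \<in> edges G \<and> 0 < t \<and> t < elen G e)"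

definition adj :: "('v,'e) mgraph \<Rightarrow> ('v \<times> 'v) set" where
  "adj G = {(tail G e, head G e) | e. e \<in> edges G} \<union> {(head G e, tail G e) | e. e \<in> edges G}"

definition metric_graph :: "('v,'e) mgraph \<Rightarrow> bool" where
  "metric_graph G \<longleftrightarrow> finite (verts G) \<and> finite (edges G) \<and> verts G \<noteq> {} \<and>
     (\<forall>e\<in>edges G. tail G e \<in> verts G \<and> head G e \<in> verts G \<and> elen G e > 0) \<and>
     (\<forall>u\<in>verts G. \<forall>w\<in>verts G. (u, w) \<in> (adj G)\<^sup>*)"

definition divisor :: "('v,'e) mgraph \<Rightarrow> (('v,'e) point \<Rightarrow> int) \<Rightarrow> bool" where
  "divisor G D \<longleftrightarrow> finite {x. D x \<noteq> 0} \<and> (\<forall>x. D x \<noteq> 0 \<longrightarrow> valid_pt G x)"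

definition vertex_supported :: "('v,'e) mgraph \<Rightarrow> (('v,'e) point \<Rightarrow> int) \<Rightarrow> bool" where
  "vertex_supported G D \<longleftrightarrow> (\<forall>x. D x \<noteq> 0 \<longrightarrow> (\<exists>v\<in>verts G. x = Vtx v))"

definition edge_fun :: "('v,'e) mgraph \<Rightarrow> (('v,'e) point \<Rightarrow> real) \<Rightarrow> 'e \<Rightarrow> real \<Rightarrow> real" where
  "edge_fun G f e t = (if t \<le> 0 then f (Vtx (tail G e))
                       else if elen G e \<le> t then f (Vtx (head G e)) else f (Pt e t))"

definition pl_int_on :: "(real \<Rightarrow> real) \<Rightarrow> real \<Rightarrow> bool" where
  "pl_int_on g M \<longleftrightarrow> (\<exists>ts. sorted_wrt (<) ts \<and> 2 \<le> length ts \<and> hd ts = 0 \<and> last ts = M \<and>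
      (\<forall>i. Suc i < length ts \<longrightarrow>
         (\<exists>s::int. \<forall>t\<in>{ts ! i .. ts ! Suc i}. g t = g (ts ! i) + of_int s * (t - ts ! i))))"

definition rat_fun :: "('v,'e) mgraph \<Rightarrow> (('v,'e) point \<Rightarrow> real) \<Rightarrow> bool" where
  "rat_fun G f \<longleftrightarrow> (\<forall>e\<in>edges G. pl_int_on (edge_fun G f e) (elen G e))"

text \<open>Outgoing slope of g at t in the direction of increasing / decreasing parameter.\<close>
definition fwd_slope :: "(real \<Rightarrow> real) \<Rightarrow> real \<Rightarrow> int" where
  "fwd_slope g t = (THE s::int. \<forall>\<^sub>F h in at_right (0::real). g (t + h) = g t + of_int s * h)"

definition bwd_slope :: "(real \<Rightarrow> real) \<Rightarrow> real \<Rightarrow> int" where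
  "bwd_slope g t = (THE s::int. \<forall>\<^sub>F h in at_right (0::real). g (t - h) = g t + of_int s * h)"

definition ordf :: "('v,'e) mgraph \<Rightarrow> (('v,'e) point \<Rightarrow> real) \<Rightarrow> ('v,'e) point \<Rightarrow> int" where
  "ordf G f x = (case x of
      Pt e t \<Rightarrow> fwd_slope (edge_fun G f e) t + bwd_slope (edge_fun G f e) t
    | Vtx v \<Rightarrow> (\<Sum>e\<in>{e\<in>edges G. tail G e = v}. fwd_slope (edge_fun G f e) 0)
              + (\<Sum>e\<in>{e\<in>edges G. head G e = v}. bwd_slope (edge_fun G f e) (elen G e)))"

definition prin :: "('v,'e) mgraph \<Rightarrow> (('v,'e) point \<Rightarrow> real) \<Rightarrow> ('v,'e) point \<Rightarrow> int" where
  "prin G f x = (if valid_pt G x then ordf G f x else 0)"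

definition plus_prin :: "('v,'e) mgraph \<Rightarrow> (('v,'e) point \<Rightarrow> int) \<Rightarrow> (('v,'e) point \<Rightarrow> real) \<Rightarrow> ('v,'e) point \<Rightarrow> int" where
  "plus_prin G D f = (\<lambda>x. D x + prin G f x)"

definition effective :: "(('v,'e) point \<Rightarrow> int) \<Rightarrow> bool" where
  "effective L \<longleftrightarrow> (\<forall>x. 0 \<le> L x)"

definition RD :: "('v,'e) mgraph \<Rightarrow> (('v,'e) point \<Rightarrow> int) \<Rightarrow> (('v,'e) point \<Rightarrow> real) set" where
  "RD G D = {f. rat_fun G f \<and> effective (plus_prin G D f)}"

definition linsys :: "('v,'e) mgraph \<Rightarrow> (('v,'e) point \<Rightarrow> int) \<Rightarrow> (('v,'e) point \<Rightarrow> int) set" where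
  "linsys G D = {plus_prin G D f | f. f \<in> RD G D}"

text \<open>Membership of L in the cell with data (dv, part, m).  part e = [] means that
  edge e carries no partition; otherwise part e = [d_e^1, ..., d_e^{r_e}].\<close>
definition in_cell :: "('v,'e) mgraph \<Rightarrow> (('v,'e) point \<Rightarrow> int) \<Rightarrow>
    ('v \<Rightarrow> nat) \<Rightarrow> ('e \<Rightarrow> nat list) \<Rightarrow> ('e \<Rightarrow> int) \<Rightarrow> (('v,'e) point \<Rightarrow> int) \<Rightarrow> bool" where
  "in_cell G D dv part m L \<longleftrightarrow> L \<in> linsys G D \<and>
     (\<forall>v\<in>verts G. L (Vtx v) = int (dv v)) \<and>
     (\<forall>e\<in>edges G. \<exists>xs::real list. length xs = length (part e) \<and> sorted_wrt (<) xs \<and>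
          (\<forall>x\<in>set xs. 0 < x \<and> x < elen G e) \<and>
          (\<forall>i<length xs. L (Pt e (xs ! i)) = int (part e ! i)) \<and>
          (\<forall>t. 0 < t \<and> t < elen G e \<and> t \<notin> set xs \<longrightarrow> L (Pt e t) = 0)) \<and>
     (\<forall>e\<in>edges G. \<forall>f\<in>RD G D. L = plus_prin G D f \<longrightarrow> fwd_slope (edge_fun G f e) 0 = m e)"

definition is_cell :: "('v,'e) mgraph \<Rightarrow> (('v,'e) point \<Rightarrow> int) \<Rightarrow> (('v,'e) point \<Rightarrow> int) set \<Rightarrow> bool" where
  "is_cell G D C \<longleftrightarrow> (\<exists>dv part m. (\<forall>e\<in>edges G. \<forall>k\<in>set (part e). 0 < k) \<and>
       C = {L. in_cell G D dv part m L})"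

definition anchor_divisor :: "('v,'e) mgraph \<Rightarrow> (('v,'e) point \<Rightarrow> int) \<Rightarrow> bool" where
  "anchor_divisor G L \<longleftrightarrow> (\<forall>e\<in>edges G. \<forall>s t. 0 < s \<and> s < elen G e \<and> 0 < t \<and> t < elen G e \<and>
       0 < L (Pt e s) \<and> 0 < L (Pt e t) \<longrightarrow> s = t)"

definition anchor_cell :: "('v,'e) mgraph \<Rightarrow> (('v,'e) point \<Rightarrow> int) \<Rightarrow> (('v,'e) point \<Rightarrow> int) set \<Rightarrow> bool" where
  "anchor_cell G D C \<longleftrightarrow> is_cell G D C \<and> (\<forall>L\<in>C. anchor_divisor G L)"

definition vertex_slopes :: "('v,'e) mgraph \<Rightarrow> (('v,'e) point \<Rightarrow> real) \<Rightarrow> 'e \<Rightarrow> int \<times> int" where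
  "vertex_slopes G f e = (fwd_slope (edge_fun G f e) 0, bwd_slope (edge_fun G f e) (elen G e))"

end

theory Submission
  imports Defs
begin

lemma ev_iff: "eventually P (at_right (0::real)) = (\<exists>b>0. \<forall>h>0. h < b \<longrightarrow> P h)"
  using eventually_at_right[of 0 1 P] by simp

lemma fwd_slope_eq:
  assumes "b > 0" "\<forall>h. 0 < h \<and> h < b \<longrightarrow> g (t + h) = g t + of_int s * h"
  shows "fwd_slope g t = s"
  unfolding fwd_slope_def
proof (rule the_equality)
  show "\<forall>\<^sub>F h in at_right 0. g (t + h) = g t + real_of_int s * h"
    unfolding ev_iff using assms by blast
next
  fix s' assume "\<forall>\<^sub>F h in at_right 0. g (t + h) = g t + real_of_int s' * h"
  then obtain b' where b': "b'>0" "\<forall>h>0. h < b' \<longrightarrow> g (t + h) = g t + real_of_int s' * h"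
    unfolding ev_iff by blast
  define h where "h = min b b' / 2"
  have "h > 0" "h < b" "h < b'" using assms(1) b'(1) by (auto simp: h_def)
  then have "real_of_int s' * h = real_of_int s * h" using assms(2) b'(2) by fastforce
  then show "s' = s" using \<open>h>0\<close> by simp
qed

lemma bwd_slope_eq:
  assumes "b > 0" "\<forall>h. 0 < h \<and> h < b \<longrightarrow> g (t - h) = g t + of_int s * h"
  shows "bwd_slope g t = s"
  unfolding bwd_slope_def
proof (rule the_equality)
  show "\<forall>\<^sub>F h in at_right 0. g (t - h) = g t + real_of_int s * h"
    unfolding ev_iff using assms by blast
next
  fix s' assume "\<forall>\<^sub>F h in at_right 0. g (t - h) = g t + real_of_int s' * h"
  then obtain b' where b': "b'>0" "\<forall>h>0. h < b' \<longrightarrow> g (t - h) = g t + real_of_int s' * h"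
    unfolding ev_iff by blast
  define h where "h = min b b' / 2"
  have "h > 0" "h < b" "h < b'" using assms(1) b'(1) by (auto simp: h_def)
  then have "real_of_int s' * h = real_of_int s * h" using assms(2) b'(2) by fastforce
  then show "s' = s" using \<open>h>0\<close> by simp
qed

lemma core:
  assumes pl: "pl_int_on g M" and x0: "0 < x0" "x0 < M"
    and z: "\<forall>t. 0 < t \<and> t < M \<and> t \<noteq> x0 \<longrightarrow> fwd_slope g t + bwd_slope g t = 0"
  shows "fwd_slope g x0 + bwd_slope g x0 = -(fwd_slope g 0 + bwd_slope g M)"
proof -
  obtain ts where st: "sorted_wrt (<) ts" and len: "2 \<le> length ts" and h0: "hd ts = 0"
    and lM: "last ts = M" and seg: "\<forall>i. Suc i < length ts \<longrightarrow>
         (\<exists>s::int. \<forall>t\<in>{ts ! i .. ts ! Suc i}. g t = g (ts ! i) + of_int s * (t - ts ! i))"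
    using pl unfolding pl_int_on_def by blast
  define n where "n = length ts"
  from seg obtain sl where sl: "\<And>i t. Suc i < n \<Longrightarrow> t \<in> {ts ! i .. ts ! Suc i} \<Longrightarrow>
        g t = g (ts ! i) + of_int (sl i) * (t - ts ! i)"
    unfolding n_def by metis
  have lt: "\<And>i j. i < j \<Longrightarrow> j < n \<Longrightarrow> ts ! i < ts ! j"
    using sorted_wrt_nth_less[OF st] n_def by blast
  have t0: "ts ! 0 = 0" using h0 len by (metis hd_conv_nth list.size(3) not_numeral_le_zero)
  have tM: "ts ! (n - 1) = M" using lM len unfolding n_def by (metis last_conv_nth list.size(3) not_numeral_le_zero)
  have fw: "fwd_slope g t = sl i" if "Suc i < n" "ts ! i \<le> t" "t < ts ! Suc i" for i t
  proof (rule fwd_slope_eq[of "ts ! Suc i - t"])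
    show "ts ! Suc i - t > 0" using that by simp
    show "\<forall>h. 0 < h \<and> h < ts ! Suc i - t \<longrightarrow> g (t + h) = g t + of_int (sl i) * h"
    proof (intro allI impI)
      fix h assume "0 < h \<and> h < ts ! Suc i - t"
      then have "g (t + h) = g (ts ! i) + of_int (sl i) * (t + h - ts ! i)"
        "g t = g (ts ! i) + of_int (sl i) * (t - ts ! i)"
        using sl[OF that(1), of "t+h"] sl[OF that(1), of t] that by simp_all
      then show "g (t + h) = g t + of_int (sl i) * h" by (simp add: algebra_simps)
    qed
  qed
  have bw: "bwd_slope g t = - sl i" if "Suc i < n" "ts ! i < t" "t \<le> ts ! Suc i" for i t
  proof (rule bwd_slope_eq[of "t - ts ! i"])
    show "t - ts ! i > 0" using that by simp
    show "\<forall>h. 0 < h \<and> h < t - ts ! i \<longrightarrow> g (t - h) = g t + of_int (- sl i) * h"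
    proof (intro allI impI)
      fix h assume "0 < h \<and> h < t - ts ! i"
      then have "g (t - h) = g (ts ! i) + of_int (sl i) * (t - h - ts ! i)"
        "g t = g (ts ! i) + of_int (sl i) * (t - ts ! i)"
        using sl[OF that(1), of "t-h"] sl[OF that(1), of t] that by simp_all
      then show "g (t - h) = g t + of_int (- sl i) * h" by (simp add: algebra_simps)
    qed
  qed
  have nonbp: "fwd_slope g t + bwd_slope g t = 0" if "0 < t" "t < M" "t \<notin> set ts" for t
  proof -
    have ex: "\<exists>j. t < ts ! j \<and> j < n" using that tM len n_def by (intro exI[of _ "n-1"]) auto
    define j where "j = (LEAST j. t < ts ! j \<and> j < n)"
    have j: "t < ts ! j" "j < n" using LeastI_ex[OF ex] unfolding j_def by auto
    have "j \<noteq> 0" using j(1) t0 that(1) by (cases j) auto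
    then obtain i where i: "j = Suc i" by (cases j) auto
    have "\<not> (t < ts ! i \<and> i < n)" using not_less_Least[of i "\<lambda>j. t < ts ! j \<and> j < n"] i j_def by auto
    then have "ts ! i \<le> t" using i j by auto
    moreover have "ts ! i \<noteq> t" using that(3) i j by (metis Suc_lessD n_def nth_mem)
    ultimately have "ts ! i < t" by simp
    have "fwd_slope g t = sl i" using fw[of i t] i j \<open>ts ! i \<le> t\<close> by auto
    moreover have "bwd_slope g t = - sl i" using bw[of i t] i j \<open>ts ! i < t\<close> by auto
    ultimately show ?thesis by simp
  qed
  have bp: "fwd_slope g (ts ! Suc k) + bwd_slope g (ts ! Suc k) = sl (Suc k) - sl k"
    if "Suc (Suc k) < n" for k
    using fw[of "Suc k" "ts ! Suc k"] bw[of k "ts ! Suc k"] that lt[of "Suc k" "Suc (Suc k)"]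
      lt[of k "Suc k"] by auto
  have inter: "0 < ts ! Suc k \<and> ts ! Suc k < M" if "Suc (Suc k) < n" for k
    using lt[of 0 "Suc k"] lt[of "Suc k" "n - 1"] that t0 tM by auto
  have f0: "fwd_slope g 0 = sl 0" using fw[of 0 0] lt[of 0 1] len t0 n_def by auto
  have bM: "bwd_slope g M = - sl (n - 2)"
    using bw[of "n - 2" M] lt[of "n-2" "n-1"] len tM n_def by (auto simp: Suc_diff_Suc numeral_2_eq_2)
  have "(\<Sum>k<n-2. fwd_slope g (ts ! Suc k) + bwd_slope g (ts ! Suc k)) = (\<Sum>k<n-2. sl (Suc k) - sl k)"
    by (rule sum.cong) (auto intro!: bp)
  also have "\<dots> = sl (n-2) - sl 0" by (rule sum_lessThan_telescope)
  finally have tel: "(\<Sum>k<n-2. fwd_slope g (ts ! Suc k) + bwd_slope g (ts ! Suc k)) = sl (n-2) - sl 0" .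
  show ?thesis
  proof (cases "\<exists>k<n-2. ts ! Suc k = x0")
    case True
    then obtain k0 where k0: "k0 < n-2" "ts ! Suc k0 = x0" by blast
    have "(\<Sum>k<n-2. fwd_slope g (ts ! Suc k) + bwd_slope g (ts ! Suc k))
        = (\<Sum>k<n-2. if k = k0 then fwd_slope g x0 + bwd_slope g x0 else 0)"
    proof (rule sum.cong)
      fix k assume k: "k \<in> {..<n-2}"
      show "fwd_slope g (ts ! Suc k) + bwd_slope g (ts ! Suc k) = (if k = k0 then fwd_slope g x0 + bwd_slope g x0 else 0)"
      proof (cases "k = k0")
        case False
        have "Suc k < n" "Suc k0 < n" using k k0 by auto
        then have "ts ! Suc k \<noteq> x0" using k0 lt[of "Suc k" "Suc k0"] lt[of "Suc k0" "Suc k"] False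
          by (cases "k < k0") auto
        then show ?thesis using z inter[of k] k False by auto
      qed (use k0 in auto)
    qed simp
    also have "\<dots> = fwd_slope g x0 + bwd_slope g x0" using k0 by (simp add: sum.delta)
    finally show ?thesis using tel f0 bM by simp
  next
    case False
    have "(\<Sum>k<n-2. fwd_slope g (ts ! Suc k) + bwd_slope g (ts ! Suc k)) = 0"
      by (rule sum.neutral) (use False z inter in auto)
    moreover have "x0 \<notin> set ts"
    proof
      assume "x0 \<in> set ts"
      then obtain j where j: "j < n" "ts ! j = x0" by (auto simp: in_set_conv_nth n_def)
      have "j \<noteq> 0" using j t0 x0 by (cases j) auto
      moreover have "j \<noteq> n - 1" using j tM x0 by auto
      ultimately obtain k where "j = Suc k" "k < n - 2" using j by (cases j) auto
      then show False using False j by auto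
    qed
    ultimately show ?thesis using nonbp[OF x0] tel f0 bM by simp
  qed
qed


lemma pl_pos: "pl_int_on g M \<Longrightarrow> 0 < M"
  unfolding pl_int_on_def
proof (elim exE conjE)
  fix ts :: "real list" assume st: "sorted_wrt (<) ts" and len: "2 \<le> length ts" and "hd ts = 0" "last ts = M"
  then have "ts ! 0 = 0" "ts ! (length ts - 1) = M"
    by (metis hd_conv_nth list.size(3) not_numeral_le_zero, metis last_conv_nth list.size(3) not_numeral_le_zero)
  moreover have "ts ! 0 < ts ! (length ts - 1)" using sorted_wrt_nth_less[OF st, of 0 "length ts - 1"] len by auto
  ultimately show "0 < M" by simp
qed

lemma edge_part:
  assumes fR: "f \<in> RD G D" and vs: "vertex_supported G D" and e: "e \<in> edges G"
    and ic: "in_cell G D dv part m (plus_prin G D f)"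
    and pos: "\<forall>k\<in>set (part e). 0 < k"
    and anc: "anchor_divisor G (plus_prin G D f)"
  shows "part e = (let T = -(fwd_slope (edge_fun G f e) 0 + bwd_slope (edge_fun G f e) (elen G e))
                   in if T = 0 then [] else [nat T])"
proof -
  define g where "g = edge_fun G f e"
  define M where "M = elen G e"
  define L where "L = plus_prin G D f"
  define T where "T = -(fwd_slope g 0 + bwd_slope g M)"
  have pl: "pl_int_on g M" using fR e unfolding RD_def rat_fun_def g_def M_def by auto
  have Mpos: "0 < M" using pl_pos[OF pl] .
  have Lint: "L (Pt e t) = fwd_slope g t + bwd_slope g t" if "0 < t" "t < M" for t
  proof -
    have "D (Pt e t) = 0" using vs unfolding vertex_supported_def by auto
    then show ?thesis using that e
      by (simp add: L_def plus_prin_def prin_def valid_pt_def ordf_def g_def M_def)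
  qed
  obtain xs :: "real list" where xs: "length xs = length (part e)" "sorted_wrt (<) xs"
    "\<forall>x\<in>set xs. 0 < x \<and> x < M" "\<forall>i<length xs. L (Pt e (xs ! i)) = int (part e ! i)"
    "\<forall>t. 0 < t \<and> t < M \<and> t \<notin> set xs \<longrightarrow> L (Pt e t) = 0"
    using ic e unfolding in_cell_def L_def M_def by blast
  have "part e = (if T = 0 then [] else [nat T])"
  proof (cases "part e")
    case Nil
    then have "xs = []" using xs(1) by simp
    then have z: "\<forall>t. 0 < t \<and> t < M \<and> t \<noteq> M/2 \<longrightarrow> fwd_slope g t + bwd_slope g t = 0"
      using xs(5) Lint by auto
    have "fwd_slope g (M/2) + bwd_slope g (M/2) = 0" using xs(5) Lint \<open>xs = []\<close> Mpos by auto
    then have "T = 0" using core[OF pl _ _ z] Mpos unfolding T_def by simp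
    then show ?thesis using Nil by simp
  next
    case (Cons k rest)
    show ?thesis
    proof (cases rest)
      case Nil
      then obtain x where x: "xs = [x]" using xs(1) Cons by (cases xs) auto
      have k: "0 < k" using pos Cons by simp
      have xin: "0 < x" "x < M" using xs(3) x by auto
      have Lx: "L (Pt e x) = int k" using xs(4) x Cons by auto
      have z: "\<forall>t. 0 < t \<and> t < M \<and> t \<noteq> x \<longrightarrow> fwd_slope g t + bwd_slope g t = 0"
        using xs(5) Lint x by auto
      have "fwd_slope g x + bwd_slope g x = T" using core[OF pl xin z] unfolding T_def by simp
      then have "T = int k" using Lint[OF xin] Lx by simp
      then show ?thesis using k Cons Nil by simp
    next
      case (Cons k2 r)
      have l2: "length xs \<ge> 2" using xs(1) \<open>part e = k # rest\<close> Cons by simp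
      have ne: "xs \<noteq> []" using l2 by (cases xs) auto
      have lt: "xs ! 0 < xs ! 1" using sorted_wrt_nth_less[OF xs(2), of 0 1] l2 by simp
      have m0: "xs ! 0 \<in> set xs" using l2 by (intro nth_mem) linarith
      have m1: "xs ! 1 \<in> set xs" using l2 by (intro nth_mem) linarith
      have in0: "0 < xs ! 0" "xs ! 0 < M" using xs(3) m0 by auto
      have in1: "0 < xs ! 1" "xs ! 1 < M" using xs(3) m1 by auto
      have p0: "0 < L (Pt e (xs ! 0))" using xs(4)[rule_format, of 0] l2 ne pos \<open>part e = k # rest\<close> by simp
      have p1: "0 < L (Pt e (xs ! 1))" using xs(4)[rule_format, of 1] l2 ne pos \<open>part e = k # rest\<close> Cons by simp
      have "xs ! 0 = xs ! 1" using anc e in0 in1 p0 p1 unfolding anchor_divisor_def L_def M_def by blast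
      then show ?thesis using lt by simp
    qed
  qed
  then show ?thesis unfolding T_def g_def M_def Let_def by simp
qed


theorem corollary2p16:
  fixes G :: "('v,'e) mgraph" and D :: "('v,'e) point \<Rightarrow> int"
    and C C' :: "(('v,'e) point \<Rightarrow> int) set" and f f' :: "('v,'e) point \<Rightarrow> real"
  assumes "metric_graph G" and "divisor G D" and "vertex_supported G D"
    and "anchor_cell G D C" and "f \<in> RD G D" and "plus_prin G D f \<in> C"
    and "anchor_cell G D C'" and "f' \<in> RD G D" and "plus_prin G D f' \<in> C'"
    and "\<forall>e\<in>edges G. vertex_slopes G f e = vertex_slopes G f' e"
  shows "C = C'"
proof -
  obtain dv part m where pos: "\<forall>e\<in>edges G. \<forall>k\<in>set (part e). 0 < k"
    and Cd: "C = {L. in_cell G D dv part m L}"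
    using assms(4) unfolding anchor_cell_def is_cell_def by blast
  obtain dv' part' m' where pos': "\<forall>e\<in>edges G. \<forall>k\<in>set (part' e). 0 < k"
    and Cd': "C' = {L. in_cell G D dv' part' m' L}"
    using assms(7) unfolding anchor_cell_def is_cell_def by blast
  have ic: "in_cell G D dv part m (plus_prin G D f)" using assms(6) Cd by simp
  have ic': "in_cell G D dv' part' m' (plus_prin G D f')" using assms(9) Cd' by simp
  have an: "anchor_divisor G (plus_prin G D f)" using assms(4,6) unfolding anchor_cell_def by blast
  have an': "anchor_divisor G (plus_prin G D f')" using assms(7,9) unfolding anchor_cell_def by blast
  have sl: "fwd_slope (edge_fun G f e) 0 = fwd_slope (edge_fun G f' e) 0"
    "bwd_slope (edge_fun G f e) (elen G e) = bwd_slope (edge_fun G f' e) (elen G e)"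
    if "e \<in> edges G" for e
    using assms(10) that unfolding vertex_slopes_def by auto
  have hm: "m e = m' e" if "e \<in> edges G" for e
  proof -
    have "fwd_slope (edge_fun G f e) 0 = m e" using ic assms(5) that unfolding in_cell_def by blast
    moreover have "fwd_slope (edge_fun G f' e) 0 = m' e" using ic' assms(8) that unfolding in_cell_def by blast
    ultimately show ?thesis using sl[OF that] by simp
  qed
  have hp: "part e = part' e" if "e \<in> edges G" for e
    using edge_part[OF assms(5,3) that ic bspec[OF pos that] an]
      edge_part[OF assms(8,3) that ic' bspec[OF pos' that] an'] sl[OF that] by simp
  have hv: "dv v = dv' v" if "v \<in> verts G" for v
  proof -
    have o: "ordf G f (Vtx v) = ordf G f' (Vtx v)"
    proof -
      have "(\<Sum>e | e \<in> edges G \<and> tail G e = v. fwd_slope (edge_fun G f e) 0)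
          = (\<Sum>e | e \<in> edges G \<and> tail G e = v. fwd_slope (edge_fun G f' e) 0)"
        by (rule sum.cong) (auto intro: sl(1))
      moreover have "(\<Sum>e | e \<in> edges G \<and> head G e = v. bwd_slope (edge_fun G f e) (elen G e))
          = (\<Sum>e | e \<in> edges G \<and> head G e = v. bwd_slope (edge_fun G f' e) (elen G e))"
        by (rule sum.cong) (auto intro: sl(2))
      ultimately show ?thesis unfolding ordf_def by simp
    qed
    have "int (dv v) = plus_prin G D f (Vtx v)" using ic that unfolding in_cell_def by simp
    also have "\<dots> = plus_prin G D f' (Vtx v)"
      using o that by (simp add: plus_prin_def prin_def valid_pt_def)
    also have "\<dots> = int (dv' v)" using ic' that unfolding in_cell_def by simp
    finally show ?thesis by simp
  qed
  have "in_cell G D dv part m L = in_cell G D dv' part' m' L" for L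
    unfolding in_cell_def using hv hm hp by auto
  then show ?thesis using Cd Cd' by simp
qed

end
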